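(* Let $\alpha_{2,3} := \sum_{m=1}^{\infty} \frac{1}{3^m 2^{3^m}}$ (the Stoneham number). Then the sequence $(\{2^n \alpha_{2,3}\})_{n \in \mathbb{N}}$ does not have Poissonian pair correlations.
   Context: $\{x\}$ denotes the fractional part of $x$ and $\|x\|$ the distance from $x$ to the nearest integer. A sequence $(x_n)_{n\in\mathbb{N}}$ in $[0,1)$ has Poissonian pair correlations if for every $s \geq 0$, $F_N(s) := \frac{1}{N}\#\{1 \leq l \neq m \leq N : \|x_l - x_m\| \leq s/N\} \to 2s$ as $N\to\infty$. *)

theory Defs
  imports "HOL-Analysis.Analysis"
begin

definition dist_int :: "real \<Rightarrow> real" where
  "dist_int x = min (frac x) (1 - frac x)"

definition pair_corr :: "(nat \<Rightarrow> real) \<Rightarrow> nat \<Rightarrow> real \<Rightarrow> real" where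
  "pair_corr x N s = real (card {(l, m). l \<in> {1..N} \<and> m \<in> {1..N} \<and> l \<noteq> m \<and>
      dist_int (x l - x m) \<le> s / real N}) / real N"

definition poissonian_pair_correlations :: "(nat \<Rightarrow> real) \<Rightarrow> bool" where
  "poissonian_pair_correlations x \<longleftrightarrow>
     (\<forall>s::real. s \<ge> 0 \<longrightarrow> (\<lambda>N. pair_corr x N s) \<longlonglongrightarrow> 2 * s)"

definition stoneham_2_3 :: real where
  "stoneham_2_3 = (\<Sum>m. 1 / (3 ^ (m + 1) * 2 ^ (3 ^ (m + 1))))"

end

theory Submission
  imports Defs
begin

definition stf :: "nat \<Rightarrow> real" where
  "stf j = 1 / (3 ^ (j + 1) * 2 ^ (3 ^ (j + 1)))"

lemma stoneham_eq: "stoneham_2_3 = suminf stf"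
  unfolding stoneham_2_3_def stf_def by simp

lemma pow3_ge: "(3::nat) ^ (a + j) \<ge> 3 ^ a + j"
proof (induction j)
  case 0 then show ?case by simp
next
  case (Suc j)
  have "(3::nat) ^ (a + Suc j) = 3 * 3 ^ (a + j)" by simp
  moreover have "(3::nat) ^ (a + j) \<ge> 1" by simp
  ultimately show ?case using Suc by linarith
qed

lemma stf_nonneg: "stf j \<ge> 0" unfolding stf_def by simp

lemma stf_bound: "stf (j + k) \<le> (1/2) ^ (3 ^ (k + 1)) * (1/2) ^ j"
proof -
  have e: "3 ^ (j + k + 1) \<ge> 3 ^ (k + 1) + j" using pow3_ge[of "k+1" j] by (simp add: add.commute add.left_commute)
  have o: "(1::real) \<le> 3 ^ (j + k + 1)" by (rule one_le_power) simp
  have "stf (j + k) \<le> 1 / 2 ^ (3 ^ (j + k + 1))"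
    unfolding stf_def
    by (rule divide_left_mono) (use o mult_right_mono[OF o, of "2 ^ (3 ^ (j + k + 1))"] in auto)
  also have "\<dots> = (1/2) ^ (3 ^ (j + k + 1))" by (simp add: power_one_over)
  also have "\<dots> \<le> (1/2) ^ (3 ^ (k + 1) + j)"
    by (rule power_decreasing[OF e]) auto
  also have "\<dots> = (1/2) ^ (3 ^ (k + 1)) * (1/2) ^ j" by (simp add: power_add)
  finally show ?thesis .
qed

lemma summable_stf: "summable stf"
proof (rule summable_comparison_test')
  show "summable (\<lambda>j. (1/2::real) ^ (3 ^ (0 + 1)) * (1/2) ^ j)"
    by (intro summable_mult summable_geometric) auto
  show "norm (stf j) \<le> (1/2) ^ (3 ^ (0 + 1)) * (1/2) ^ j" if "j \<ge> 0" for j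
    using stf_bound[of j 0] stf_nonneg[of j] by simp
qed

lemma tail_bound: "(\<Sum>j. stf (j + k)) \<le> 2 * (1/2) ^ (3 ^ (k + 1))"
proof -
  have s: "summable (\<lambda>j. (1/2::real) ^ (3 ^ (k + 1)) * (1/2) ^ j)"
    by (intro summable_mult summable_geometric) auto
  have "(\<Sum>j. stf (j + k)) \<le> (\<Sum>j. (1/2::real) ^ (3 ^ (k + 1)) * (1/2) ^ j)"
    by (rule suminf_le[OF stf_bound]) (use summable_stf summable_ignore_initial_segment s in auto)
  also have "\<dots> = (1/2) ^ (3 ^ (k + 1)) * 2"
    by (subst suminf_mult) (auto simp: suminf_geometric)
  finally show ?thesis by simp
qed

lemma tail_nonneg: "(\<Sum>j. stf (j + k)) \<ge> 0"
  by (rule suminf_nonneg) (use summable_stf summable_ignore_initial_segment stf_nonneg in auto)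

lemma dvd3: "(3::int) ^ (k + 1) dvd 4 ^ (3 ^ k) - 1"
proof (induction k)
  case 0 then show ?case by simp
next
  case (Suc k)
  then obtain c where c: "4 ^ (3 ^ k) - 1 = (3::int) ^ (k + 1) * c" by blast
  define a :: int where "a = 4 ^ (3 ^ k)"
  have a: "a = 1 + 3 ^ (k + 1) * c" using c a_def by simp
  have "(4::int) ^ (3 ^ Suc k) = a ^ 3" by (simp add: a_def power_mult[symmetric] mult.commute)
  also have "a ^ 3 - 1 = 3 ^ (Suc k + 1) * (c + 3 ^ (k+1) * c^2 + 3 ^ (2*k+1) * c^3)"
    proof -
    have e: "(3::int) ^ (k * 2) = 3 ^ k * 3 ^ k" by (simp add: mult_2_right power_add mult.commute[of k 2])
    show ?thesis unfolding a by (simp add: algebra_simps power2_eq_square power3_eq_cube power_add power_mult_distrib e)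
  qed
  finally show ?case by simp
qed

lemma int_term:
  assumes "j \<le> K" "3 ^ (K + 1) \<le> n"
  shows "2 ^ (n + 2 * 3 ^ K) * stf j - 2 ^ n * stf j \<in> \<int>"
proof -
  define e :: nat where "e = 3 ^ (j + 1)"
  have "e \<le> 3 ^ (K + 1)" unfolding e_def by (rule power_increasing) (use assms in auto)
  hence en: "e \<le> n" using assms by simp
  have "(3::int) ^ (j + 1) dvd 3 ^ (K + 1)" by (rule le_imp_power_dvd) (use assms in auto)
  hence "(3::int) ^ (j + 1) dvd 4 ^ (3 ^ K) - 1" using dvd3 dvd_trans by blast
  then obtain c where c: "4 ^ (3 ^ K) - 1 = (3::int) ^ (j + 1) * c" by blast
  hence cr: "(4::real) ^ (3 ^ K) - 1 = 3 ^ (j + 1) * of_int c"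
    by (metis (mono_tags, opaque_lifting) of_int_1 of_int_diff of_int_mult of_int_numeral of_int_power)
  have p4: "(2::real) ^ (2 * 3 ^ K) = 4 ^ (3 ^ K)" by (simp add: power_mult)
  have pn: "(2::real) ^ n = 2 ^ (n - e) * 2 ^ e" using en by (simp add: power_add[symmetric])
  have "2 ^ (n + 2 * 3 ^ K) * stf j - 2 ^ n * stf j = 2 ^ n * (2 ^ (2 * 3 ^ K) - 1) * stf j"
    by (simp add: power_add algebra_simps)
  also have "\<dots> = 2 ^ (n - e) * 2 ^ e * (3 ^ (j + 1) * of_int c) / (3 ^ (j + 1) * 2 ^ e)"
    unfolding p4 cr pn stf_def e_def by simp
  also have "\<dots> = 2 ^ (n - e) * of_int c" by simp
  finally show ?thesis by simp
qed

lemma dist_int_le: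
  assumes "y - \<delta> \<in> \<int>" "0 \<le> \<delta>" "\<delta> < 1"
  shows "dist_int y \<le> \<delta>"
proof -
  obtain z where z: "y - \<delta> = of_int z" using assms(1) Ints_cases by blast
  have "floor y = z" by (rule floor_unique) (use z assms in auto)
  hence "frac y = \<delta>" using z by (simp add: frac_def)
  thus ?thesis unfolding dist_int_def by simp
qed

lemma pair_close:
  assumes "3 ^ (K + 1) \<le> n" "n + 2 * 3 ^ K + 2 * K + 8 \<le> 3 ^ (K + 2)"
  shows "dist_int (frac (2 ^ (n + 2 * 3 ^ K) * stoneham_2_3) - frac (2 ^ n * stoneham_2_3))
          \<le> (1/8) / real (3 ^ (K + 2))"
proof -
  define d :: nat where "d = 2 * 3 ^ K"
  define N :: nat where "N = 3 ^ (K + 2)"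
  define T where "T = (\<Sum>j. stf (j + (K + 1)))"
  define S where "S = (\<Sum>j<K+1. stf j)"
  have al: "stoneham_2_3 = T + S" unfolding stoneham_eq T_def S_def
    by (rule suminf_split_initial_segment[OF summable_stf])
  have T0: "T \<ge> 0" unfolding T_def by (rule tail_nonneg)
  have T1: "T \<le> 2 * (1/2) ^ N" unfolding T_def N_def using tail_bound[of "K+1"] by simp
  define \<delta> where "\<delta> = (2 ^ (n + d) - 2 ^ n) * T"
  have zint: "(\<Sum>j<K+1. 2 ^ (n + d) * stf j - 2 ^ n * stf j) \<in> \<int>"
    by (rule Ints_sum) (use int_term assms(1) in \<open>auto simp: d_def\<close>)
  have "2 ^ (n + d) * stoneham_2_3 - 2 ^ n * stoneham_2_3 - \<delta>
        = (\<Sum>j<K+1. 2 ^ (n + d) * stf j - 2 ^ n * stf j)"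
    unfolding al \<delta>_def S_def by (simp add: sum_subtractf sum_distrib_left sum_distrib_right algebra_simps)
  hence A: "2 ^ (n + d) * stoneham_2_3 - 2 ^ n * stoneham_2_3 - \<delta> \<in> \<int>" using zint by simp
  have B: "frac (2 ^ (n + d) * stoneham_2_3) - frac (2 ^ n * stoneham_2_3) - \<delta>
     = (2 ^ (n + d) * stoneham_2_3 - 2 ^ n * stoneham_2_3 - \<delta>)
       - (of_int (floor (2 ^ (n + d) * stoneham_2_3)) - of_int (floor (2 ^ n * stoneham_2_3)))"
    by (simp add: frac_def)
  have C: "frac (2 ^ (n + d) * stoneham_2_3) - frac (2 ^ n * stoneham_2_3) - \<delta> \<in> \<int>"
    unfolding B by (rule Ints_diff[OF A]) (intro Ints_diff Ints_of_int)
  have d0: "\<delta> \<ge> 0" unfolding \<delta>_def using T0 by (simp add: power_increasing)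
  have nd: "n + d \<le> N" using assms(2) unfolding d_def N_def by simp
  have "\<delta> \<le> 2 ^ (n + d) * T" unfolding \<delta>_def using T0 by (simp add: algebra_simps)
  also have "\<dots> \<le> 2 ^ (n + d) * (2 * (1/2) ^ N)" using T1 by simp
  also have "\<dots> = 2 * (1/2) ^ (N - (n + d))"
  proof -
    have "(1/2::real) ^ N = (1/2) ^ (N - (n + d)) * (1/2) ^ (n + d)"
      using nd by (simp add: power_add[symmetric])
    thus ?thesis by (simp add: power_one_over)
  qed
  also have "\<dots> \<le> 2 * (1/2) ^ (2 * K + 8)"
    using assms(2) unfolding d_def N_def by (intro mult_left_mono power_decreasing) auto
  also have "\<dots> = 1 / (128 * 4 ^ K)" by (simp add: power_add power_mult power_one_over)
  also have "\<dots> \<le> 1 / (72 * 3 ^ K)"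
  proof -
    have "(3::real) ^ K \<le> 4 ^ K" by (rule power_mono) auto
    hence "72 * (3::real) ^ K \<le> 128 * 4 ^ K" using zero_le_power[of "3::real" K] by linarith
    moreover have "0 < 72 * (3::real) ^ K" by simp
    ultimately show ?thesis by (intro frac_le) auto
  qed
  also have "\<dots> = (1/8) / real (3 ^ (K + 2))" by simp
  finally have d1: "\<delta> \<le> (1/8) / real (3 ^ (K + 2))" .
  have "(1/8) / real (3 ^ (K + 2)) \<le> 1/8" using one_le_power[of "3::real" "K+2"] by (simp add: divide_le_eq)
  hence "\<delta> < 1" using d1 by linarith
  from dist_int_le[OF C d0 this] d1 show ?thesis unfolding d_def by simp
qed

lemma pow3_lin: "K \<ge> 3 \<Longrightarrow> (3::nat) ^ K \<ge> 2 * K + 7"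
proof (induction K rule: dec_induct)
  case base then show ?case by simp
next
  case (step K) then show ?case by simp
qed

lemma count_bound:
  assumes K: "K \<ge> 3"
  shows "pair_corr (\<lambda>n. frac (2 ^ n * stoneham_2_3)) (3 ^ (K + 2)) (1/8) \<ge> 1/3"
proof -
  define x where "x = (\<lambda>n::nat. frac (2 ^ n * stoneham_2_3))"
  define N :: nat where "N = 3 ^ (K + 2)"
  define d :: nat where "d = 2 * 3 ^ K"
  define a :: nat where "a = 3 ^ (K + 1)"
  define b :: nat where "b = N - d - 2 * K - 8"
  define S where "S = {(l, m). l \<in> {1..N} \<and> m \<in> {1..N} \<and> l \<noteq> m \<and>
      dist_int (x l - x m) \<le> (1/8) / real N}"
  have p: "3 ^ K \<ge> 2 * K + 7" using pow3_lin K by simp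
  have Ne: "N = 9 * 3 ^ K" "a = 3 * 3 ^ K" unfolding N_def a_def by simp_all
  have sub: "(\<lambda>n. (n + d, n)) ` {a..b} \<subseteq> S"
  proof
    fix y assume "y \<in> (\<lambda>n. (n + d, n)) ` {a..b}"
    then obtain n where n: "n \<in> {a..b}" "y = (n + d, n)" by blast
    have c1: "3 ^ (K + 1) \<le> n" using n unfolding a_def by simp
    have c2: "n + 2 * 3 ^ K + 2 * K + 8 \<le> 3 ^ (K + 2)" using n p Ne unfolding b_def d_def N_def by (simp, arith)
    have "dist_int (x (n + d) - x n) \<le> (1/8) / real N"
      using pair_close[OF c1 c2] unfolding x_def d_def N_def by simp
    moreover have "1 \<le> n" "n + d \<le> N" "n \<le> N" "d > 0" using n p Ne unfolding b_def d_def by auto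
    ultimately show "y \<in> S" unfolding S_def using n by auto
  qed
  have inj: "inj_on (\<lambda>n. (n + d, n)) {a..b}" by (rule inj_onI) auto
  have fin: "finite S" by (rule finite_subset[of _ "{1..N} \<times> {1..N}"]) (auto simp: S_def)
  have "card {a..b} \<le> card S" using card_inj_on_le[OF inj sub fin] .
  hence cS: "3 * 3 ^ K \<le> card S" using p Ne unfolding b_def d_def by simp
  have "pair_corr x N (1/8) = real (card S) / real N" unfolding pair_corr_def S_def by simp
  also have "\<dots> \<ge> real (3 * 3 ^ K) / real N"
  proof -
    have "real (3 * 3 ^ K) \<le> real (card S)" using cS by (simp only: of_nat_le_iff)
    thus ?thesis by (intro divide_right_mono) auto
  qed
  finally have "pair_corr x N (1/8) \<ge> real (3 * 3 ^ K) / real N" .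
  moreover have "real (3 * 3 ^ K) / real N = 1/3" unfolding Ne by simp
  ultimately show ?thesis unfolding x_def N_def by simp
qed

theorem theorem3:
  shows "\<not> poissonian_pair_correlations (\<lambda>n. frac (2 ^ n * stoneham_2_3))"
proof
  assume "poissonian_pair_correlations (\<lambda>n. frac (2 ^ n * stoneham_2_3))"
  hence A: "\<forall>s::real. s \<ge> 0 \<longrightarrow> (\<lambda>N. pair_corr (\<lambda>n. frac (2 ^ n * stoneham_2_3)) N s) \<longlonglongrightarrow> 2 * s"
    unfolding poissonian_pair_correlations_def .
  have L: "(\<lambda>N. pair_corr (\<lambda>n. frac (2 ^ n * stoneham_2_3)) N (1/8)) \<longlonglongrightarrow> 2 * (1/8)"
    by (rule A[rule_format]) simp
  have "eventually (\<lambda>N. pair_corr (\<lambda>n. frac (2 ^ n * stoneham_2_3)) N (1/8) < 1/3) sequentially"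
    by (rule order_tendstoD(2)[OF L]) simp
  then obtain M where M: "\<And>N. N \<ge> M \<Longrightarrow> pair_corr (\<lambda>n. frac (2 ^ n * stoneham_2_3)) N (1/8) < 1/3"
    unfolding eventually_sequentially by blast
  define K where "K = max 3 M"
  have "K < 3 ^ K" by (rule less_exp[THEN less_le_trans]) (rule power_mono, auto)
  hence "M \<le> 3 ^ (K + 2)" unfolding K_def by (smt (verit) le_trans less_imp_le_nat max.cobounded2 power_increasing le_add1 zero_less_numeral Suc_leI one_le_numeral)
  from M[OF this] count_bound[of K] show False unfolding K_def by simp
qed

end
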